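(* Let $i\in\mathbb{N}$ be fixed and let $G\in\mathcal{G}_{k,n,p}$. For all $v,w\in V(G)$, \[ \mathbb{P}_w[X_i=v]=\frac{\mathcal{W}_i(w,v)}{\mathcal{W}_i(w)}\pm\mathcal{O}\!\left(\frac{\sqrt{\log n}}{p^{3/2}n^{3/2}}\right). \]
   Context: Fix an integer $k\ge2$ and let $p=p(n)$ satisfy $\frac{\log n}{n^{(k-1)/k}}\le p\le 1-\Omega(\frac{\log^4 n}{n})$. $\mathcal{G}_{k,n,p}$ denotes the set of graphs $G$ on $n$ vertices satisfying: (i) $G$ is not bipartite; (ii) $\operatorname{diam}(G)\le k$; (iii) every vertex has degree $d(v)=pn\pm\mathcal{O}(\sqrt{pn\log n})$; (iv) $2|E(G)|=pn^2\pm\mathcal{O}(\sqrt{pn^2\log n})$; (v) $|N(v)\cap N(w)|=p^2n\pm\mathcal{O}(\max\{\sqrt{p^2n\log n},\log n\})$ for all $v\ne w$; (vi) the unit eigenvector $\phi$ of the largest adjacency eigenvalue has entries $\phi_i=\frac1{\sqrt n}\pm\mathcal{O}(\frac{\log^{3/2}n}{\sqrt p\,n\log(pn)})$; (vii) $\lambda_1=(1+o(1))pn$; (viii) $\max\{|\lambda_2|,|\lambda_n|\}=\mathcal{O}(\sqrt{pn})$, where $\lambda_1\ge\dots\ge\lambda_n$ are the adjacency eigenvalues. Asymptotic notation is as $n\to\infty$ with constants independent of $n$. $X$ is a simple random walk on $G$ and $\mathbb{P}_w[\cdot]=\mathbb{P}[\cdot\mid X_0=w]$. $\mathcal{W}_i(w)$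 is the number of walks of length $i$ starting at $w$ and $\mathcal{W}_i(w,v)$ the number of walks of length $i$ from $w$ to $v$. *)

theory Defs
  imports Complex_Main "Jordan_Normal_Form.Char_Poly"
begin

text \<open>A graph on the vertex set {0..<n} is given by an adjacency relation E,
required (in the class definition) to be symmetric and irreflexive on {0..<n}.\<close>

definition is_walk :: "nat \<Rightarrow> (nat \<Rightarrow> nat \<Rightarrow> bool) \<Rightarrow> nat list \<Rightarrow> bool" where
  "is_walk n E xs \<longleftrightarrow> xs \<noteq> [] \<and> set xs \<subseteq> {..<n} \<and>
     (\<forall>j. Suc j < length xs \<longrightarrow> E (xs ! j) (xs ! Suc j))"

definition walks_from :: "nat \<Rightarrow> (nat \<Rightarrow> nat \<Rightarrow> bool) \<Rightarrow> nat \<Rightarrow> nat \<Rightarrow> nat" where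
  "walks_from n E i w = card {xs. is_walk n E xs \<and> length xs = Suc i \<and> hd xs = w}"

definition walks_between :: "nat \<Rightarrow> (nat \<Rightarrow> nat \<Rightarrow> bool) \<Rightarrow> nat \<Rightarrow> nat \<Rightarrow> nat \<Rightarrow> nat" where
  "walks_between n E i w v =
     card {xs. is_walk n E xs \<and> length xs = Suc i \<and> hd xs = w \<and> last xs = v}"

definition degree :: "nat \<Rightarrow> (nat \<Rightarrow> nat \<Rightarrow> bool) \<Rightarrow> nat \<Rightarrow> nat" where
  "degree n E v = card {u. u < n \<and> E v u}"

definition num_edges :: "nat \<Rightarrow> (nat \<Rightarrow> nat \<Rightarrow> bool) \<Rightarrow> nat" where
  "num_edges n E = card {(u, v). u < v \<and> v < n \<and> E u v}"

definition codegree :: "nat \<Rightarrow> (nat \<Rightarrow> nat \<Rightarrow> bool) \<Rightarrow> nat \<Rightarrow> nat \<Rightarrow> nat" where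
  "codegree n E v w = card {u. u < n \<and> E v u \<and> E w u}"

fun rw_prob :: "nat \<Rightarrow> (nat \<Rightarrow> nat \<Rightarrow> bool) \<Rightarrow> nat \<Rightarrow> nat \<Rightarrow> nat \<Rightarrow> real" where
  "rw_prob n E 0 w v = (if v = w then 1 else 0)"
| "rw_prob n E (Suc i) w v =
     (\<Sum>u<n. rw_prob n E i w u * (if E u v then 1 / real (degree n E u) else 0))"

definition bipartite :: "nat \<Rightarrow> (nat \<Rightarrow> nat \<Rightarrow> bool) \<Rightarrow> bool" where
  "bipartite n E \<longleftrightarrow> (\<exists>c :: nat \<Rightarrow> bool. \<forall>u<n. \<forall>v<n. E u v \<longrightarrow> c u \<noteq> c v)"

definition diam_le :: "nat \<Rightarrow> (nat \<Rightarrow> nat \<Rightarrow> bool) \<Rightarrow> nat \<Rightarrow> bool" where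
  "diam_le n E k \<longleftrightarrow> (\<forall>v<n. \<forall>w<n. \<exists>j\<le>k. walks_between n E j w v > 0)"

definition adj_mat :: "nat \<Rightarrow> (nat \<Rightarrow> nat \<Rightarrow> bool) \<Rightarrow> real mat" where
  "adj_mat n E = mat n n (\<lambda>(i, j). if E i j then 1 else 0)"

definition adj_eigs :: "nat \<Rightarrow> (nat \<Rightarrow> nat \<Rightarrow> bool) \<Rightarrow> real list" where
  "adj_eigs n E = (THE l. sorted_wrt (\<ge>) l \<and>
       char_poly (adj_mat n E) = (\<Prod>a\<leftarrow>l. [:- a, 1:]))"

text \<open>The class G_{k,n,p}. The implicit constants of the O-terms are bounded by C,
  and the o(1) in (vii) is bounded by eps n, where eps is a function tending to 0.\<close>
definition in_class :: "real \<Rightarrow> (nat \<Rightarrow> real) \<Rightarrow> nat \<Rightarrow> nat \<Rightarrow> real \<Rightarrow> (nat \<Rightarrow> nat \<Rightarrow> bool) \<Rightarrow> bool" where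
  "in_class C eps k n p E \<longleftrightarrow>
     (\<forall>u<n. \<forall>v<n. E u v = E v u) \<and> (\<forall>u<n. \<not> E u u) \<and>
     \<not> bipartite n E \<and>
     diam_le n E k \<and>
     (\<forall>v<n. \<bar>real (degree n E v) - p * n\<bar> \<le> C * sqrt (p * n * ln n)) \<and>
     \<bar>2 * real (num_edges n E) - p * n^2\<bar> \<le> C * sqrt (p * n^2 * ln n) \<and>
     (\<forall>v<n. \<forall>w<n. v \<noteq> w \<longrightarrow>
        \<bar>real (codegree n E v w) - p^2 * n\<bar> \<le> C * max (sqrt (p^2 * n * ln n)) (ln n)) \<and>
     (let l = adj_eigs n E in
        (\<exists>\<phi> :: nat \<Rightarrow> real.
           (\<Sum>j<n. (\<phi> j)^2) = 1 \<and>
           (\<forall>i<n. (\<Sum>j<n. (if E i j then 1 else 0) * \<phi> j) = hd l * \<phi> i) \<and>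
           (\<forall>i<n. \<bar>\<phi> i - 1 / sqrt n\<bar> \<le> C * ln n powr (3/2) / (sqrt p * n * ln (p * n)))) \<and>
        \<bar>hd l - p * n\<bar> \<le> eps n * (p * n) \<and>
        max \<bar>l ! 1\<bar> \<bar>last l\<bar> \<le> C * sqrt (p * n))"

end

theory Submission
  imports Defs
begin

lemma is_walk_snoc:
  assumes "ys \<noteq> []"
  shows "is_walk n E (ys @ [v]) \<longleftrightarrow> is_walk n E ys \<and> v < n \<and> E (last ys) v"
proof
  assume h: "is_walk n E (ys @ [v])"
  have a: "set ys \<subseteq> {..<n}" "v < n" using h by (auto simp: is_walk_def)
  have b: "E (ys ! j) (ys ! Suc j)" if "Suc j < length ys" for j
  proof -
    have "E ((ys @ [v]) ! j) ((ys @ [v]) ! Suc j)" using h that by (auto simp: is_walk_def)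
    thus ?thesis using that by (simp add: nth_append)
  qed
  have c: "E (last ys) v"
  proof -
    obtain j where j: "length ys = Suc j" using assms by (cases ys) auto
    have "E ((ys @ [v]) ! j) ((ys @ [v]) ! Suc j)" using h j by (auto simp: is_walk_def)
    thus ?thesis using j assms by (simp add: nth_append last_conv_nth)
  qed
  show "is_walk n E ys \<and> v < n \<and> E (last ys) v" using a b c assms by (auto simp: is_walk_def)
next
  assume h: "is_walk n E ys \<and> v < n \<and> E (last ys) v"
  show "is_walk n E (ys @ [v])" unfolding is_walk_def
  proof (intro conjI allI impI)
    show "ys @ [v] \<noteq> []" by simp
    show "set (ys @ [v]) \<subseteq> {..<n}" using h by (auto simp: is_walk_def)
    fix j assume j: "Suc j < length (ys @ [v])"
    show "E ((ys @ [v]) ! j) ((ys @ [v]) ! Suc j)"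
    proof (cases "Suc j < length ys")
      case True thus ?thesis using h by (auto simp: is_walk_def nth_append)
    next
      case False
      hence jj: "j = length ys - 1" "Suc j = length ys" using j by simp_all
      thus ?thesis using h assms by (simp add: nth_append last_conv_nth)
    qed
  qed
qed

definition WS :: "nat \<Rightarrow> (nat \<Rightarrow> nat \<Rightarrow> bool) \<Rightarrow> nat \<Rightarrow> nat \<Rightarrow> nat \<Rightarrow> nat list set" where
  "WS n E i w v = {xs. is_walk n E xs \<and> length xs = Suc i \<and> hd xs = w \<and> last xs = v}"

lemma wb_card: "walks_between n E i w v = card (WS n E i w v)"
  by (simp add: walks_between_def WS_def)

lemma WS_finite: "finite (WS n E i w v)"
proof -
  have "WS n E i w v \<subseteq> {xs. set xs \<subseteq> {..<n} \<and> length xs = Suc i}"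
    by (auto simp: WS_def is_walk_def)
  moreover have "finite {xs. set xs \<subseteq> {..<n} \<and> length xs = Suc i}"
    by (rule finite_lists_length_eq) simp
  ultimately show ?thesis by (rule finite_subset)
qed

lemma walks_between_0: "walks_between n E 0 w v = (if w < n \<and> v = w then 1 else 0)"
proof -
  have "{xs. is_walk n E xs \<and> length xs = Suc 0 \<and> hd xs = w \<and> last xs = v}
        = (if w < n \<and> v = w then {[w]} else {})"
    by (auto simp: is_walk_def length_Suc_conv)
  thus ?thesis by (simp add: walks_between_def)
qed

lemma walks_between_Suc:
  assumes "v < n"
  shows "walks_between n E (Suc i) w v = (\<Sum>u<n. if E u v then walks_between n E i w u else 0)"
proof -
  let ?U = "\<Union>u\<in>{u\<in>{..<n}. E u v}. WS n E i w u"
  have eq: "WS n E (Suc i) w v = (\<lambda>ys. ys @ [v]) ` ?U"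
  proof
    show "WS n E (Suc i) w v \<subseteq> (\<lambda>ys. ys @ [v]) ` ?U"
    proof
      fix xs assume xs: "xs \<in> WS n E (Suc i) w v"
      let ?ys = "butlast xs"
      have ne: "?ys \<noteq> []" using xs by (auto simp: WS_def butlast_conv_take)
      have xne: "xs \<noteq> []" and xl: "last xs = v" and xh: "hd xs = w" using xs by (auto simp: WS_def is_walk_def)
      have xe: "xs = ?ys @ [v]" using append_butlast_last_id[OF xne] xl by simp
      have w: "is_walk n E (?ys @ [v])" using xs xe by (simp add: WS_def)
      hence "is_walk n E ?ys \<and> v < n \<and> E (last ?ys) v" using is_walk_snoc[OF ne] by blast
      moreover have "hd ?ys = w"
      proof -
        have "hd (?ys @ [v]) = hd ?ys" using ne by simp
        thus ?thesis using xe xh by simp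
      qed
      moreover have "length ?ys = Suc i" using xs by (simp add: WS_def)
      moreover have "last ?ys < n" using calculation(1) last_in_set[OF ne] unfolding is_walk_def by blast
      ultimately have "?ys \<in> ?U" by (auto simp: WS_def)
      thus "xs \<in> (\<lambda>ys. ys @ [v]) ` ?U" using xe by blast
    qed
  next
    show "(\<lambda>ys. ys @ [v]) ` ?U \<subseteq> WS n E (Suc i) w v"
    proof
      fix xs assume "xs \<in> (\<lambda>ys. ys @ [v]) ` ?U"
      then obtain ys u where ys: "ys \<in> WS n E i w u" "u < n" "E u v" and xs: "xs = ys @ [v]" by auto
      have ne: "ys \<noteq> []" using ys by (auto simp: WS_def is_walk_def)
      show "xs \<in> WS n E (Suc i) w v" using ys ne assms is_walk_snoc[OF ne, of n E v]
        by (auto simp: WS_def xs)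
    qed
  qed
  have "card (WS n E (Suc i) w v) = card ?U"
    unfolding eq by (rule card_image) (auto simp: inj_on_def)
  also have "\<dots> = (\<Sum>u\<in>{u\<in>{..<n}. E u v}. card (WS n E i w u))"
    by (rule card_UN_disjoint) (auto simp: WS_finite[unfolded WS_def] WS_def)
  also have "\<dots> = (\<Sum>u<n. if E u v then card (WS n E i w u) else 0)"
    by (rule sum.inter_filter) simp
  finally show ?thesis by (simp only: wb_card)
qed

lemma walks_from_sum:
  "walks_from n E i w = (\<Sum>v<n. walks_between n E i w v)"
proof -
  have "{xs. is_walk n E xs \<and> length xs = Suc i \<and> hd xs = w} = (\<Union>v\<in>{..<n}. WS n E i w v)"
  proof (auto simp: WS_def)
    fix xs assume "is_walk n E xs"
    thus "last xs < n" unfolding is_walk_def using last_in_set[of xs] by blast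
  qed
  hence "walks_from n E i w = card (\<Union>v\<in>{..<n}. WS n E i w v)" by (simp add: walks_from_def)
  also have "\<dots> = (\<Sum>v<n. card (WS n E i w v))"
    by (rule card_UN_disjoint) (auto simp: WS_finite[unfolded WS_def] WS_def)
  finally show ?thesis by (simp only: wb_card)
qed


lemma real_if0: "real (if P then a else 0) = (if P then real a else 0)" by simp

lemma wbS_real: "v < n \<Longrightarrow> real (walks_between n E (Suc i) w v) = (\<Sum>u<n. if E u v then real (walks_between n E i w u) else 0)"
  by (simp only: walks_between_Suc of_nat_sum real_if0)

lemma rw_bounds:
  assumes w: "w < n" and m: "0 < m" and dg: "\<And>u. u < n \<Longrightarrow> m \<le> real (degree n E u) \<and> real (degree n E u) \<le> M"
  shows "v < n \<Longrightarrow> real (walks_between n E i w v) / M ^ i \<le> rw_prob n E i w v \<and>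
            rw_prob n E i w v \<le> real (walks_between n E i w v) / m ^ i"
proof (induction i arbitrary: v)
  case 0
  thus ?case using w by (simp add: walks_between_0)
next
  case (Suc i)
  have M: "0 < M" using dg[OF w] m by linarith
  let ?W = "\<lambda>u. real (walks_between n E i w u)"
  have ws: "real (walks_between n E (Suc i) w v) = (\<Sum>u<n. if E u v then ?W u else 0)"
    using wbS_real[OF Suc.prems] .
  have up: "rw_prob n E (Suc i) w v \<le> real (walks_between n E (Suc i) w v) / m ^ Suc i"
  proof -
    have "rw_prob n E (Suc i) w v \<le> (\<Sum>u<n. (?W u / m ^ i) * (if E u v then 1 / m else 0))"
    proof (simp only: rw_prob.simps, rule sum_mono)
      fix u assume u: "u \<in> {..<n}"
      have ih: "?W u / M ^ i \<le> rw_prob n E i w u" "rw_prob n E i w u \<le> ?W u / m ^ i"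
        using Suc.IH[of u] u by auto
      have "0 \<le> ?W u / M ^ i" using M by simp
      hence p0: "0 \<le> rw_prob n E i w u" using ih by linarith
      have d: "m \<le> real (degree n E u)" using dg u by auto
      have "(if E u v then 1 / real (degree n E u) else 0) \<le> (if E u v then 1 / m else 0)"
        using d m by (auto intro: divide_left_mono)
      moreover have "0 \<le> (if E u v then 1 / real (degree n E u) else 0)" by simp
      ultimately show "rw_prob n E i w u * (if E u v then 1 / real (degree n E u) else 0)
          \<le> ?W u / m ^ i * (if E u v then 1 / m else 0)"
        using ih p0 by (intro mult_mono) auto
    qed
    also have "\<dots> = (\<Sum>u<n. if E u v then ?W u else 0) / m ^ Suc i"
      unfolding sum_divide_distrib by (rule sum.cong) auto
    finally show ?thesis using ws by simp
  qed
  have lo: "real (walks_between n E (Suc i) w v) / M ^ Suc i \<le> rw_prob n E (Suc i) w v"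
  proof -
    have "(\<Sum>u<n. if E u v then ?W u else 0) / M ^ Suc i = (\<Sum>u<n. (?W u / M ^ i) * (if E u v then 1 / M else 0))"
      unfolding sum_divide_distrib by (rule sum.cong) auto
    also have "\<dots> \<le> rw_prob n E (Suc i) w v"
    proof (simp only: rw_prob.simps, rule sum_mono)
      fix u assume u: "u \<in> {..<n}"
      have ih: "?W u / M ^ i \<le> rw_prob n E i w u"
        using Suc.IH[of u] u by auto
      have d: "real (degree n E u) \<le> M" "m \<le> real (degree n E u)" using dg u by auto
      have "(if E u v then 1 / M else 0) \<le> (if E u v then 1 / real (degree n E u) else 0)"
        using d m by (auto intro: divide_left_mono)
      moreover have "0 \<le> (if E u v then 1 / M else 0)" using M by simp
      moreover have "0 \<le> ?W u / M ^ i" using M by simp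
      ultimately show "?W u / M ^ i * (if E u v then 1 / M else 0)
          \<le> rw_prob n E i w u * (if E u v then 1 / real (degree n E u) else 0)"
        using ih by (intro mult_mono) auto
    qed
    finally show ?thesis using ws by simp
  qed
  show ?case using up lo by simp
qed

lemma sum_if_const: "(\<Sum>v<n. if E u v then (c::real) else 0) = c * real (degree n E u)"
proof -
  have "(\<Sum>v<n. if E u v then c else 0) = (\<Sum>v\<in>{v\<in>{..<n}. E u v}. c)"
    by (rule sum.inter_filter[symmetric]) simp
  also have "{v\<in>{..<n}. E u v} = {v. v < n \<and> E u v}" by auto
  finally show ?thesis by (simp add: degree_def)
qed

lemma wf_bounds:
  assumes w: "w < n" and m: "0 < m" and dg: "\<And>u. u < n \<Longrightarrow> m \<le> real (degree n E u) \<and> real (degree n E u) \<le> M"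
  shows "m ^ i \<le> real (walks_from n E i w) \<and> real (walks_from n E i w) \<le> M ^ i"
proof (induction i)
  case 0
  have "(\<Sum>v<n. walks_between n E 0 w v) = (\<Sum>v<n. if v = w then 1 else 0)"
    using w by (intro sum.cong) (auto simp: walks_between_0)
  also have "\<dots> = 1" using w by simp
  finally show ?case by (simp add: walks_from_sum)
next
  case (Suc i)
  let ?W = "\<lambda>u. real (walks_between n E i w u)"
  have "real (walks_from n E (Suc i) w) = (\<Sum>v<n. \<Sum>u<n. if E u v then ?W u else 0)"
    unfolding walks_from_sum of_nat_sum by (rule sum.cong) (auto simp: wbS_real)
  also have "\<dots> = (\<Sum>u<n. \<Sum>v<n. if E u v then ?W u else 0)" by (rule sum.swap)
  also have "\<dots> = (\<Sum>u<n. ?W u * real (degree n E u))" by (simp add: sum_if_const)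
  finally have eq: "real (walks_from n E (Suc i) w) = (\<Sum>u<n. ?W u * real (degree n E u))" .
  have wf: "real (walks_from n E i w) = (\<Sum>u<n. ?W u)" by (simp add: walks_from_sum of_nat_sum)
  have "(\<Sum>u<n. ?W u * real (degree n E u)) \<le> (\<Sum>u<n. ?W u * M)"
    by (rule sum_mono) (use dg in \<open>auto intro: mult_left_mono\<close>)
  also have "\<dots> = M * real (walks_from n E i w)" by (simp add: wf sum_distrib_left mult.commute)
  also have "\<dots> \<le> M * M ^ i" using Suc.IH m dg[OF w] by (intro mult_left_mono) auto
  finally have u: "real (walks_from n E (Suc i) w) \<le> M ^ Suc i" using eq by simp
  have "m * m ^ i \<le> m * real (walks_from n E i w)" using Suc.IH m by simp
  also have "\<dots> = (\<Sum>u<n. ?W u * m)" by (simp add: wf sum_distrib_left mult.commute)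
  also have "\<dots> \<le> (\<Sum>u<n. ?W u * real (degree n E u))"
    by (rule sum_mono) (use dg in \<open>auto intro: mult_left_mono\<close>)
  finally have l: "m ^ Suc i \<le> real (walks_from n E (Suc i) w)" using eq by simp
  show ?case using u l by simp
qed

lemma wb_le_wf:
  assumes "v < n"
  shows "walks_between n E (Suc i) w v \<le> walks_from n E i w"
proof -
  have "walks_between n E (Suc i) w v \<le> (\<Sum>u<n. walks_between n E i w u)"
    unfolding walks_between_Suc[OF assms] by (rule sum_mono) auto
  thus ?thesis by (simp add: walks_from_sum)
qed

lemma pow_diff_le:
  fixes a b :: real
  assumes "0 \<le> b" "b \<le> a"
  shows "a ^ i - b ^ i \<le> real i * (a - b) * a ^ (i - 1)"
proof (induction i)
  case 0 thus ?case by simp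
next
  case (Suc i)
  have a0: "0 \<le> a" using assms by linarith
  have "a ^ Suc i - b ^ Suc i = a * (a ^ i - b ^ i) + b ^ i * (a - b)" by (simp add: algebra_simps)
  also have "\<dots> \<le> a * (real i * (a - b) * a ^ (i - 1)) + a ^ i * (a - b)"
    using Suc.IH a0 assms by (intro add_mono mult_left_mono mult_right_mono power_mono) auto
  also have "\<dots> = real (Suc i) * (a - b) * a ^ i"
    by (cases i) (auto simp: algebra_simps)
  finally show ?case by simp
qed


lemma key_bound:
  assumes w: "w < n" and v: "v < n" and m: "0 < m"
    and dg: "\<And>u. u < n \<Longrightarrow> m \<le> real (degree n E u) \<and> real (degree n E u) \<le> M"
  shows "\<bar>rw_prob n E i w v - real (walks_between n E i w v) / real (walks_from n E i w)\<bar>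
         \<le> real i * (M - m) * M ^ (i - 1) / (M * m ^ i)"
proof -
  have M: "0 < M" "m \<le> M" using dg[OF w] m by auto
  define W where "W = real (walks_between n E i w v)"
  define Wf where "Wf = real (walks_from n E i w)"
  define P where "P = rw_prob n E i w v"
  have P: "W / M ^ i \<le> P" "P \<le> W / m ^ i" using rw_bounds[OF w m dg v] by (auto simp: W_def P_def)
  have Wf: "m ^ i \<le> Wf" "Wf \<le> M ^ i" using wf_bounds[OF w m dg] by (auto simp: Wf_def)
  have W0: "0 \<le> W" by (simp add: W_def)
  have mi: "0 < m ^ i" using m by simp
  have R: "W / M ^ i \<le> W / Wf" "W / Wf \<le> W / m ^ i"
    using Wf W0 mi by (auto intro!: divide_left_mono)
  have abs: "\<bar>P - W / Wf\<bar> \<le> W / m ^ i - W / M ^ i" using P R by linarith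
  show ?thesis
  proof (cases i)
    case 0 thus ?thesis using abs by (simp add: P_def W_def Wf_def)
  next
    case (Suc j)
    have WM: "W \<le> M ^ j"
    proof -
      have "W \<le> real (walks_from n E j w)" unfolding W_def Suc using wb_le_wf[OF v] by simp
      also have "\<dots> \<le> M ^ j" using wf_bounds[OF w m dg] by simp
      finally show ?thesis .
    qed
    have nz: "m ^ i \<noteq> 0" "M ^ i \<noteq> 0" using m M by auto
    have "W / m ^ i - W / M ^ i = W * (M ^ i - m ^ i) / (m ^ i * M ^ i)"
      by (simp add: diff_frac_eq[OF nz] right_diff_distrib)
    also have "\<dots> \<le> M ^ j * (real i * (M - m) * M ^ j) / (m ^ i * M ^ i)"
    proof (rule divide_right_mono)
      have "M ^ i - m ^ i \<le> real i * (M - m) * M ^ (i - 1)" using pow_diff_le[of m M i] m M by simp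
      moreover have "0 \<le> M ^ i - m ^ i" using m M by (simp add: power_mono)
      ultimately show "W * (M ^ i - m ^ i) \<le> M ^ j * (real i * (M - m) * M ^ j)"
        using WM W0 Suc by (intro mult_mono) auto
    qed (use mi M in simp)
    also have "\<dots> = real i * (M - m) * M ^ (i - 1) / (M * m ^ i)"
    proof -
      have c: "x * A / (y * (M' * x)) = A / (M' * y)" if "x \<noteq> 0" for x A y M' :: real
        using that by (simp add: field_simps)
      have "M ^ i = M * M ^ j" by (simp add: Suc)
      moreover have "M ^ j \<noteq> 0" using M by simp
      ultimately show ?thesis using c[of "M ^ j" "real i * (M - m) * M ^ j" "m ^ i" M] by (simp add: Suc)
    qed
    finally show ?thesis using abs by (simp add: P_def W_def Wf_def)
  qed
qed

lemma final_arith: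
  fixes q s :: real
  assumes q: "0 < q" and s: "0 \<le> s" "s \<le> q / 2"
  shows "real (Suc j) * ((q + s) - (q - s)) * (q + s) ^ j / ((q + s) * (q - s) ^ Suc j)
         \<le> 4 * real (Suc j) * 3 ^ j * s / q ^ 2"
proof -
  have a: "(q + s) ^ j \<le> (3 * q / 2) ^ j" using s q by (intro power_mono) auto
  have b: "(q / 2) ^ Suc j \<le> (q - s) ^ Suc j" using s q by (intro power_mono) auto
  have qs: "q \<le> q + s" using s by simp
  have pos: "0 < (q/2) ^ Suc j" using q by simp
  have "real (Suc j) * ((q + s) - (q - s)) * (q + s) ^ j / ((q + s) * (q - s) ^ Suc j)
        \<le> real (Suc j) * (2 * s) * (3 * q / 2) ^ j / (q * (q / 2) ^ Suc j)"
  proof (rule frac_le)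
    show "0 \<le> real (Suc j) * (2 * s) * (3 * q / 2) ^ j" using s q by simp
    have e: "(q + s) - (q - s) = 2 * s" by simp
    show "real (Suc j) * ((q + s) - (q - s)) * (q + s) ^ j \<le> real (Suc j) * (2 * s) * (3 * q / 2) ^ j"
      unfolding e using a s by (intro mult_left_mono) auto
    show "0 < q * (q / 2) ^ Suc j" using q pos by simp
    show "q * (q / 2) ^ Suc j \<le> (q + s) * (q - s) ^ Suc j"
      using qs b q pos by (intro mult_mono) auto
  qed
  also have "\<dots> = 4 * real (Suc j) * 3 ^ j * s / q ^ 2"
    using q by (simp add: field_simps power_mult_distrib power2_eq_square)
  finally show ?thesis .
qed

lemma sqrt_powr_eq:
  fixes q l :: real
  assumes "0 < q"
  shows "sqrt (q * l) / q ^ 2 = sqrt l / q powr (3/2)"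
proof -
  have "q powr (3/2) = q powr 1 * q powr (1/2)" by (subst powr_add[symmetric]) simp
  also have "\<dots> = q * sqrt q" using assms by (simp add: powr_half_sqrt)
  finally have "q powr (3/2) = q * sqrt q" .
  moreover have "sqrt q * sqrt q = q" using assms by simp
  ultimately show ?thesis using assms by (simp add: real_sqrt_mult field_simps power2_eq_square)
qed


lemma ev_large:
  fixes p :: "nat \<Rightarrow> real" and k :: nat and C :: real
  assumes k: "k \<ge> 2"
    and hp: "\<forall>\<^sub>F n in sequentially. ln n / real n powr ((real k - 1) / real k) \<le> p n"
  shows "\<forall>\<^sub>F n in sequentially. 2 \<le> n \<and> 0 < p n \<and> 4 * C^2 * ln n \<le> p n * real n"
proof -
  define X where "X = 4 * C^2 + 1"
  have X: "1 \<le> X" by (simp add: X_def)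
  have e1: "\<forall>\<^sub>F n in sequentially. X ^ k \<le> real n \<and> 2 \<le> n"
  proof -
    obtain N :: nat where N: "X ^ k \<le> real N" using real_arch_simple by blast
    show ?thesis unfolding eventually_sequentially
    proof (intro exI[of _ "max N 2"] allI impI conjI)
      fix n assume "max N 2 \<le> n"
      thus "2 \<le> n" "X ^ k \<le> real n" using N by auto
    qed
  qed
  show ?thesis using e1 hp
  proof (eventually_elim)
    case (elim n)
    have n2: "2 \<le> n" and nX: "X ^ k \<le> real n" using elim by auto
    have hpn: "ln n / real n powr ((real k - 1) / real k) \<le> p n" using elim by auto
    have rn: "(2::real) \<le> real n" using n2 by simp
    have ln0: "0 < ln (real n)" using rn by simp
    have np: "0 < real n powr ((real k - 1) / real k)" using rn by simp
    have "0 < ln (real n) / real n powr ((real k - 1) / real k)" by (rule divide_pos_pos[OF ln0 np])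
    hence p0: "0 < p n" using hpn by linarith
    have kk: "1 - (real k - 1) / real k = 1 / real k" using k by (simp add: field_simps)
    have "real n powr (1 / real k) = real n powr (1 - (real k - 1) / real k)" by (simp only: kk)
    also have "\<dots> = real n powr 1 / real n powr ((real k - 1) / real k)" by (rule powr_diff)
    also have "\<dots> = real n / real n powr ((real k - 1) / real k)" using rn by simp
    finally have "real n / real n powr ((real k - 1) / real k) = real n powr (1 / real k)" by simp
    have "X = (X ^ k) powr (1 / real k)"
      using X k by (simp add: powr_realpow[symmetric] powr_powr)
    also have "\<dots> \<le> real n powr (1 / real k)" using nX X by (intro powr_mono2) auto
    finally have Xn: "X \<le> real n powr (1 / real k)" .
    have "4 * C^2 * ln n \<le> X * ln n" using ln0 by (simp add: X_def)
    also have "\<dots> \<le> real n powr (1 / real k) * ln n" using Xn ln0 by simp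
    also have "\<dots> = ln n / real n powr ((real k - 1) / real k) * real n"
      by (simp only: \<open>real n / real n powr ((real k - 1) / real k) = real n powr (1 / real k)\<close>[symmetric]) (simp add: field_simps)
    also have "\<dots> \<le> p n * real n" using hpn rn by (intro mult_right_mono) auto
    finally show ?case using n2 p0 by simp
  qed
qed


theorem proposition6p3:
  fixes k i :: nat and p :: "nat \<Rightarrow> real"
  assumes "k \<ge> 2"
    and "\<forall>\<^sub>F n in sequentially. ln n / real n powr ((real k - 1) / real k) \<le> p n"
    and "\<exists>c>0. \<forall>\<^sub>F n in sequentially. p n \<le> 1 - c * (ln n)^4 / n"
  shows "\<forall>C>0. \<forall>eps. eps \<longlonglongrightarrow> 0 \<longrightarrow>
    (\<exists>D. \<forall>\<^sub>F n in sequentially. \<forall>E. in_class C eps k n (p n) E \<longrightarrow>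
       (\<forall>v<n. \<forall>w<n.
          \<bar>rw_prob n E i w v - real (walks_between n E i w v) / real (walks_from n E i w)\<bar>
            \<le> D * sqrt (ln n) / (p n powr (3/2) * real n powr (3/2))))"
proof (intro allI impI)
  fix C :: real and eps :: "nat \<Rightarrow> real"
  assume C: "C > 0"
  show "\<exists>D. \<forall>\<^sub>F n in sequentially. \<forall>E. in_class C eps k n (p n) E \<longrightarrow>
       (\<forall>v<n. \<forall>w<n.
          \<bar>rw_prob n E i w v - real (walks_between n E i w v) / real (walks_from n E i w)\<bar>
            \<le> D * sqrt (ln n) / (p n powr (3/2) * real n powr (3/2)))"
  proof (intro exI[of _ "4 * real i * 3 ^ i * C"])
    show "\<forall>\<^sub>F n in sequentially. \<forall>E. in_class C eps k n (p n) E \<longrightarrow>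
       (\<forall>v<n. \<forall>w<n.
          \<bar>rw_prob n E i w v - real (walks_between n E i w v) / real (walks_from n E i w)\<bar>
            \<le> 4 * real i * 3 ^ i * C * sqrt (ln n) / (p n powr (3/2) * real n powr (3/2)))"
      using ev_large[OF assms(1) assms(2), of C]
    proof eventually_elim
      case (elim n)
      have n2: "2 \<le> n" and p0: "0 < p n" and big: "4 * C^2 * ln n \<le> p n * real n" using elim by auto
      define q where "q = p n * real n"
      define s where "s = C * sqrt (q * ln n)"
      have rn: "(2::real) \<le> real n" using n2 by simp
      have ln0: "0 < ln (real n)" using rn by simp
      have q0: "0 < q" using p0 rn by (simp add: q_def)
      have s0: "0 \<le> s" using C q0 ln0 by (simp add: s_def)
      have "2 * s = sqrt (4 * C^2 * (q * ln n))"
        using C by (simp add: s_def real_sqrt_mult real_sqrt_abs)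
      also have "\<dots> \<le> sqrt (q * q)"
        using big q0 by (intro real_sqrt_le_mono) (simp add: q_def[symmetric] mult.assoc[symmetric])
      also have "\<dots> = q" using q0 by simp
      finally have sq: "s \<le> q / 2" by simp
      have RHS: "4 * real i * 3 ^ i * s / q ^ 2
             = 4 * real i * 3 ^ i * C * sqrt (ln n) / (p n powr (3/2) * real n powr (3/2))"
      proof -
        have "q powr (3/2) = p n powr (3/2) * real n powr (3/2)"
          using p0 by (simp add: q_def powr_mult)
        moreover have "s / q ^ 2 = C * (sqrt (q * ln n) / q ^ 2)" by (simp add: s_def)
        ultimately have e: "s / q ^ 2 = C * sqrt (ln n) / (p n powr (3/2) * real n powr (3/2))"
          using sqrt_powr_eq[OF q0, of "ln n"] by simp
        have "4 * real i * 3 ^ i * s / q ^ 2 = 4 * real i * 3 ^ i * (s / q ^ 2)" by simp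
        also have "\<dots> = 4 * real i * 3 ^ i * (C * sqrt (ln n) / (p n powr (3/2) * real n powr (3/2)))"
          by (simp only: e)
        finally show ?thesis by simp
      qed
      show ?case
      proof (intro allI impI)
        fix E v w assume cls: "in_class C eps k n (p n) E" and v: "v < n" and w: "w < n"
        have dgb: "\<bar>real (degree n E u) - q\<bar> \<le> s" if "u < n" for u
          using cls that by (simp add: in_class_def q_def s_def)
        have m0: "0 < q - s" using sq q0 by simp
        have dg: "q - s \<le> real (degree n E u) \<and> real (degree n E u) \<le> q + s" if "u < n" for u
          using dgb[OF that] by linarith
        note kb = key_bound[OF w v m0 dg, of i]
        show "\<bar>rw_prob n E i w v - real (walks_between n E i w v) / real (walks_from n E i w)\<bar>
            \<le> 4 * real i * 3 ^ i * C * sqrt (ln n) / (p n powr (3/2) * real n powr (3/2))"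
        proof (cases i)
          case 0
          have "0 \<le> 4 * real i * 3 ^ i * C * sqrt (ln n) / (p n powr (3/2) * real n powr (3/2))"
            using C ln0 p0 by simp
          thus ?thesis using kb 0 by simp
        next
          case (Suc j)
          have "real i * ((q + s) - (q - s)) * (q + s) ^ (i - 1) / ((q + s) * (q - s) ^ i)
                \<le> 4 * real i * 3 ^ j * s / q ^ 2"
            using final_arith[OF q0 s0 sq, of j] by (simp add: Suc)
          also have "\<dots> \<le> 4 * real i * 3 ^ i * s / q ^ 2"
            using s0 q0 by (intro divide_right_mono mult_right_mono mult_left_mono) (auto simp: Suc)
          finally show ?thesis using kb RHS by simp
        qed
      qed
    qed
  qed
qed

end
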